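(* Let $\mathcal{R}>0$, $\alpha>0$, $\beta>0$ be fixed, and let $\bar\gamma_{\mathrm{D}}>0$ with $\bar\gamma_{\mathrm{R}}=\alpha\bar\gamma_{\mathrm{D}}$ and $\bar\gamma_{\mathrm{E}}=\bar\gamma_{\mathrm{R}}/\beta$. Let $h_{\mathrm{S},\mathrm{R}},h_{\mathrm{R},\mathrm{D}},h_{\mathrm{S},\mathrm{E}},h_{\mathrm{R},\mathrm{E}}$ be independent $\mathcal{CN}(0,1)$ random variables, and define $$\mathcal{R}^{3}_{\mathrm{S}\to\mathrm{R}}=\log_2\frac{1+\bar\gamma_{\mathrm{R}}|h_{\mathrm{S},\mathrm{R}}|^2}{1+\bar\gamma_{\mathrm{E}}|h_{\mathrm{S},\mathrm{E}}|^2},\qquad \mathcal{R}^{3}_{\mathrm{R}\to\mathrm{D}}=\log_2\frac{1+\bar\gamma_{\mathrm{D}}|h_{\mathrm{R},\mathrm{D}}|^2}{1+\bar\gamma_{\mathrm{E}}|h_{\mathrm{R},\mathrm{E}}|^2},$$ $\mathcal{R}_3=\max\{\min\{\mathcal{R}^{3}_{\mathrm{S}\to\mathrm{R}},\mathcal{R}^{3}_{\mathrm{R}\to\mathrm{D}}\},0\}$ and $\mathcal{P}_3=\Pr(\mathcal{R}_3<\mathcal{R})$. Then as $\bar\gamma_{\mathrm{D}}\to\infty$, $$\mathcal{P}_3\approx\mathcal{P}_3^{\lim}+\hat{\mathcal{M}}_3\bar\gamma_{\mathrm{D}}^{-1},$$ in the sense that $\mathcal{P}_3\to\mathcal{P}_3^{\lim}$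 and $\bar\gamma_{\mathrm{D}}(\mathcal{P}_3-\mathcal{P}_3^{\lim})\to\hat{\mathcal{M}}_3$, where $$\mathcal{P}_3^{\lim}=1-\frac{\beta}{\beta+\alpha 2^{\mathcal{R}}}\cdot\frac{\beta}{\beta+2^{\mathcal{R}}},\qquad \hat{\mathcal{M}}_3=\frac{(2^{\mathcal{R}}-1)(1+1/\alpha)}{\left(1+\frac{\alpha}{\beta}2^{\mathcal{R}}\right)\left(1+\frac{1}{\beta}2^{\mathcal{R}}\right)}.$$
   Context: $\mathcal{CN}(0,1)$ denotes a circularly symmetric complex Gaussian random variable with zero mean and unit variance (Rayleigh fading). The quantities model a decode-and-forward relay system where the eavesdropper overhears both source and relay; $\bar\gamma$'s are average SNRs, $\mathcal{R}_3$ the secrecy capacity and $\mathcal{P}_3$ the secrecy outage probability. *)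

theory Defs
  imports "HOL-Probability.Probability"
begin

definition CN01 :: "'a measure \<Rightarrow> ('a \<Rightarrow> complex) \<Rightarrow> bool" where
  "CN01 M h \<longleftrightarrow>
     distributed M lborel h (\<lambda>z. ennreal (exp (- (cmod z)\<^sup>2) / pi))"

definition R3 :: "real \<Rightarrow> real \<Rightarrow> real \<Rightarrow> complex \<Rightarrow> complex \<Rightarrow> complex \<Rightarrow> complex \<Rightarrow> real" where
  "R3 \<alpha> \<beta> \<gamma>D hSR hRD hSE hRE =
     (let \<gamma>R = \<alpha> * \<gamma>D; \<gamma>E = \<gamma>R / \<beta>;
          RSR = log 2 ((1 + \<gamma>R * (cmod hSR)\<^sup>2) / (1 + \<gamma>E * (cmod hSE)\<^sup>2));
          RRD = log 2 ((1 + \<gamma>D * (cmod hRD)\<^sup>2) / (1 + \<gamma>E * (cmod hRE)\<^sup>2))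
      in max (min RSR RRD) 0)"

definition P3 :: "'a measure \<Rightarrow> real \<Rightarrow> real \<Rightarrow> real \<Rightarrow> real
    \<Rightarrow> ('a \<Rightarrow> complex) \<Rightarrow> ('a \<Rightarrow> complex) \<Rightarrow> ('a \<Rightarrow> complex) \<Rightarrow> ('a \<Rightarrow> complex) \<Rightarrow> real" where
  "P3 M \<R> \<alpha> \<beta> \<gamma>D hSR hRD hSE hRE =
     measure M {\<omega> \<in> space M. R3 \<alpha> \<beta> \<gamma>D (hSR \<omega>) (hRD \<omega>) (hSE \<omega>) (hRE \<omega>) < \<R>}"

end

theory Submission imports Defs "HOL-Real_Asymp.Real_Asymp" begin

lemma exp_as_integral:
  "ennreal (exp (- a)) = (\<integral>\<^sup>+r. ennreal (exp (- r)) * indicator {a..} r \<partial>lborel)"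
proof -
  have "(\<integral>\<^sup>+r. ennreal (exp (- r)) * indicator {a..} r \<partial>lborel)
      = (\<integral>\<^sup>+x. ennreal (exp (- (a + x))) * indicator {a..} (a + x) \<partial>lborel)"
    using nn_integral_real_affine[of "\<lambda>r. ennreal (exp (- r)) * indicator {a..} r" 1 a] by simp
  also have "\<dots> = (\<integral>\<^sup>+x. ennreal (exp (- a)) * (ennreal (x^0 * exp (- x)) * indicator {0..} x) \<partial>lborel)"
    by (intro nn_integral_cong) (auto simp: indicator_def exp_diff exp_add ennreal_mult[symmetric] exp_minus field_simps)
  also have "\<dots> = ennreal (exp (- a))"
    by (subst nn_integral_cmult) (auto simp: nn_intergal_power_times_exp_Ici[of 0, simplified])
  finally show ?thesis by simp
qed

lemma annulus:
  fixes k s r :: real assumes "k > 0" "s \<ge> 0"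
  shows "emeasure lborel {z::complex. s \<le> (cmod z)\<^sup>2 \<and> k * (cmod z)\<^sup>2 \<le> r}
     = ennreal (pi * max 0 (r / k - s))"
proof (cases "r / k \<ge> s")
  case True
  have r: "r \<ge> 0" using assms True by (smt (verit) zero_le_divide_iff)
  have eq: "{z::complex. s \<le> (cmod z)\<^sup>2 \<and> k * (cmod z)\<^sup>2 \<le> r} = cball 0 (sqrt (r/k)) - ball 0 (sqrt s)"
  proof -
    have h1: "cmod z < sqrt s \<longleftrightarrow> (cmod z)\<^sup>2 < s" for z :: complex
      by (metis abs_norm_cancel real_sqrt_abs real_sqrt_less_iff)
    have h2: "cmod z \<le> sqrt (r/k) \<longleftrightarrow> k * (cmod z)\<^sup>2 \<le> r" for z :: complex
      using assms by (metis abs_norm_cancel real_sqrt_abs real_sqrt_le_iff pos_le_divide_eq mult.commute)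
    show ?thesis using h1 h2 by (auto simp: dist_norm)
  qed
  have "emeasure lborel (cball 0 (sqrt (r/k)) - ball (0::complex) (sqrt s))
     = emeasure lborel (cball (0::complex) (sqrt (r/k))) - emeasure lborel (ball (0::complex) (sqrt s))"
  proof (rule emeasure_Diff[of lborel "ball (0::complex) (sqrt s)" "cball 0 (sqrt (r/k))"])
    show "emeasure lborel (ball (0::complex) (sqrt s)) \<noteq> \<infinity>"
      using emeasure_lborel_ball_finite[of "0::complex" "sqrt s"] by simp
    have "sqrt s \<le> sqrt (r/k)" using True by simp
    then show "ball (0::complex) (sqrt s) \<subseteq> cball 0 (sqrt (r/k))" by (auto simp del: real_sqrt_le_iff simp: dist_norm)
  qed auto
  also have "\<dots> = ennreal (pi * (r/k)) - ennreal (pi * s)"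
    using assms r by (simp add: emeasure_cball emeasure_ball unit_ball_vol_2)
  also have "\<dots> = ennreal (pi * max 0 (r / k - s))"
    using True assms by (simp add: ennreal_minus[symmetric] algebra_simps)
  finally show ?thesis using eq by simp
next
  case False
  then have e: "{z::complex. s \<le> (cmod z)\<^sup>2 \<and> k * (cmod z)\<^sup>2 \<le> r} = {}"
    using assms apply (auto simp: field_simps)
    by (smt (verit, best) mult_left_mono)
  show ?thesis unfolding e using False by simp
qed

lemma layer_cake:
  fixes k s :: real assumes k: "k > 0" and s: "s \<ge> 0"
  shows "(\<integral>\<^sup>+(z::complex). ennreal (exp (- (k * (cmod z)\<^sup>2))) * indicator {z. s \<le> (cmod z)\<^sup>2} z \<partial>lborel)
     = ennreal (pi * exp (- (k * s)) / k)"
proof -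
  have "(\<integral>\<^sup>+(z::complex). ennreal (exp (- (k * (cmod z)\<^sup>2))) * indicator {z. s \<le> (cmod z)\<^sup>2} z \<partial>lborel)
     = (\<integral>\<^sup>+(z::complex). (\<integral>\<^sup>+r. ennreal (exp (- r)) * indicator {k * (cmod z)\<^sup>2..} r \<partial>lborel) * indicator {z. s \<le> (cmod z)\<^sup>2} z \<partial>lborel)"
    by (subst exp_as_integral) simp
  also have "\<dots> = (\<integral>\<^sup>+(z::complex). (\<integral>\<^sup>+r. ennreal (exp (- r)) * indicator {z. s \<le> (cmod z)\<^sup>2 \<and> k * (cmod z)\<^sup>2 \<le> r} z \<partial>lborel) \<partial>lborel)"
    by (intro nn_integral_cong, subst nn_integral_multc[symmetric]) (auto intro!: nn_integral_cong simp: indicator_def)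
  also have "\<dots> = (\<integral>\<^sup>+r. (\<integral>\<^sup>+(z::complex). ennreal (exp (- r)) * indicator {z. s \<le> (cmod z)\<^sup>2 \<and> k * (cmod z)\<^sup>2 \<le> r} z \<partial>lborel) \<partial>lborel)"
    by (rule lborel_pair.Fubini'[symmetric]) (auto simp: indicator_def case_prod_beta)
  also have "\<dots> = (\<integral>\<^sup>+r. ennreal (exp (- r)) * ennreal (pi * max 0 (r / k - s)) \<partial>lborel)"
    using k s by (intro nn_integral_cong) (simp add: nn_integral_cmult annulus)
  also have "\<dots> = (\<integral>\<^sup>+r. ennreal (pi / k) * ennreal (exp (- r) * max 0 (r - k * s)) \<partial>lborel)"
    using k s by (intro nn_integral_cong) (auto simp: ennreal_mult[symmetric] field_simps max_def)
  also have "\<dots> = ennreal (pi / k) * (\<integral>\<^sup>+r. ennreal (exp (- r) * max 0 (r - k * s)) \<partial>lborel)"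
    by (rule nn_integral_cmult) auto
  also have "(\<integral>\<^sup>+r. ennreal (exp (- r) * max 0 (r - k * s)) \<partial>lborel)
      = (\<integral>\<^sup>+x. ennreal (exp (- (k * s + x)) * max 0 (k * s + x - k * s)) \<partial>lborel)"
    using nn_integral_real_affine[of "\<lambda>r. ennreal (exp (- r) * max 0 (r - k * s))" 1 "k * s"] by simp
  also have "\<dots> = (\<integral>\<^sup>+x. ennreal (exp (- (k * s))) * (ennreal (x^1 * exp (- x)) * indicator {0..} x) \<partial>lborel)"
    by (intro nn_integral_cong) (auto simp: indicator_def ennreal_mult[symmetric] exp_add exp_diff exp_minus field_simps max_def)
  also have "\<dots> = ennreal (exp (- (k * s)))"
    by (subst nn_integral_cmult) (auto simp: nn_intergal_power_times_exp_Ici[of 1, simplified])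
  finally show ?thesis using k by (simp add: ennreal_mult[symmetric])
qed

lemma (in prob_space) tail_pair:
  fixes h1 h2 :: "'a \<Rightarrow> complex" and c d :: real
  assumes "CN01 M h1" "CN01 M h2" "indep_var borel h2 borel h1" "c \<ge> 0" "d \<ge> 0"
  shows "emeasure M {\<omega> \<in> space M. c + d * (cmod (h2 \<omega>))\<^sup>2 \<le> (cmod (h1 \<omega>))\<^sup>2} = ennreal (exp (- c) / (1 + d))"
proof -
  define f where "f = (\<lambda>z::complex. ennreal (exp (- (cmod z)\<^sup>2) / pi))"
  have d1: "distributed M lborel h1 f" and d2: "distributed M lborel h2 f"
    using assms(1,2) by (auto simp: CN01_def f_def)
  have ind: "indep_var lborel (id \<circ> h2) lborel (id \<circ> h1)"
    by (rule indep_var_compose[OF assms(3)]) auto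
  have J: "distributed M (lborel \<Otimes>\<^sub>M lborel) (\<lambda>x. (h2 x, h1 x)) (\<lambda>(x, y). f x * f y)"
    by (rule distributed_joint_indep) (use d1 d2 ind in \<open>auto intro: lborel.sigma_finite_measure_axioms\<close>)
  define S where "S = {(w::complex, z::complex). c + d * (cmod w)\<^sup>2 \<le> (cmod z)\<^sup>2}"
  have S[measurable]: "S \<in> sets (lborel \<Otimes>\<^sub>M lborel)"
  proof -
    have "{p \<in> space (lborel \<Otimes>\<^sub>M lborel). c + d * (cmod (fst p))\<^sup>2 \<le> (cmod (snd p))\<^sup>2} \<in> sets (lborel \<Otimes>\<^sub>M (lborel :: complex measure))"
      by measurable
    also have "{p \<in> space (lborel \<Otimes>\<^sub>M lborel). c + d * (cmod (fst p))\<^sup>2 \<le> (cmod (snd p))\<^sup>2} = S"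
      by (auto simp: S_def space_pair_measure)
    finally show ?thesis .
  qed
  have "{\<omega> \<in> space M. c + d * (cmod (h2 \<omega>))\<^sup>2 \<le> (cmod (h1 \<omega>))\<^sup>2} = (\<lambda>x. (h2 x, h1 x)) -` S \<inter> space M"
    by (auto simp: S_def)
  then have "emeasure M {\<omega> \<in> space M. c + d * (cmod (h2 \<omega>))\<^sup>2 \<le> (cmod (h1 \<omega>))\<^sup>2}
      = (\<integral>\<^sup>+p. (\<lambda>(x, y). f x * f y) p * indicator S p \<partial>(lborel \<Otimes>\<^sub>M lborel))"
    using distributed_emeasure[OF J S] by simp
  also have "\<dots> = (\<integral>\<^sup>+w. \<integral>\<^sup>+z. f w * f z * indicator S (w, z) \<partial>lborel \<partial>lborel)"
    by (subst lborel.nn_integral_fst[symmetric]) (simp_all add: f_def case_prod_beta)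
  also have "\<dots> = (\<integral>\<^sup>+w. ennreal (exp (- c) / pi) * (ennreal (exp (- ((1 + d) * (cmod w)\<^sup>2))) * indicator {w. 0 \<le> (cmod w)\<^sup>2} w) \<partial>lborel)"
  proof (intro nn_integral_cong)
    fix w :: complex
    have "(\<integral>\<^sup>+z. f w * f z * indicator S (w, z) \<partial>lborel)
       = (\<integral>\<^sup>+z. ennreal (exp (- (cmod w)\<^sup>2) / pi / pi) * (ennreal (exp (- (1 * (cmod z)\<^sup>2))) * indicator {z. c + d * (cmod w)\<^sup>2 \<le> (cmod z)\<^sup>2} z) \<partial>lborel)"
      by (intro nn_integral_cong) (auto simp: f_def S_def indicator_def ennreal_mult[symmetric])
    also have "\<dots> = ennreal (exp (- (cmod w)\<^sup>2) / pi / pi) * ennreal (pi * exp (- (1 * (c + d * (cmod w)\<^sup>2))) / 1)"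
      using assms(4,5) layer_cake[of 1 "c + d * (cmod w)\<^sup>2"] by (subst nn_integral_cmult) auto
    also have "\<dots> = ennreal (exp (- c) / pi) * (ennreal (exp (- ((1 + d) * (cmod w)\<^sup>2))) * indicator {w. 0 \<le> (cmod w)\<^sup>2} w)"
      by (auto simp: ennreal_mult[symmetric] exp_add[symmetric] exp_diff exp_minus field_simps)
    finally show "(\<integral>\<^sup>+z. f w * f z * indicator S (w, z) \<partial>lborel) = \<dots>" .
  qed
  also have "\<dots> = ennreal (exp (- c) / pi) * ennreal (pi * exp (- ((1 + d) * 0)) / (1 + d))"
    using assms(4,5) layer_cake[of "1 + d" 0] by (subst nn_integral_cmult) auto
  also have "\<dots> = ennreal (exp (- c) / (1 + d))"
    using assms(5) by (simp add: ennreal_mult[symmetric])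
  finally show ?thesis .
qed

lemma ratio_iff:
  fixes g e t X Y :: real
  assumes "g > 0" "e \<ge> 0" "X \<ge> 0" "Y \<ge> 0"
  shows "t \<le> (1 + g * X) / (1 + e * Y) \<longleftrightarrow> (t - 1) / g + (t * e / g) * Y \<le> X"
proof -
  have "1 + e * Y > 0" using assms by (smt (verit) mult_nonneg_nonneg)
  then have "t \<le> (1 + g * X) / (1 + e * Y) \<longleftrightarrow> t * (1 + e * Y) \<le> 1 + g * X"
    by (simp add: pos_le_divide_eq)
  also have "\<dots> \<longleftrightarrow> (t - 1 + t * e * Y) / g \<le> X"
    using assms by (simp add: pos_divide_le_eq algebra_simps)
  also have "(t - 1 + t * e * Y) / g = (t - 1) / g + (t * e / g) * Y"
    by (simp add: add_divide_distrib)
  finally show ?thesis .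
qed

lemma R3_iff:
  fixes \<alpha> \<beta> \<gamma> \<R> :: real and a b c e :: complex
  assumes "\<alpha> > 0" "\<beta> > 0" "\<gamma> > 0" "\<R> > 0"
  shows "R3 \<alpha> \<beta> \<gamma> a b c e < \<R> \<longleftrightarrow>
    \<not> ((2 powr \<R> - 1) / (\<alpha> * \<gamma>) + (2 powr \<R> / \<beta>) * (cmod c)\<^sup>2 \<le> (cmod a)\<^sup>2 \<and>
       (2 powr \<R> - 1) / \<gamma> + (2 powr \<R> * \<alpha> / \<beta>) * (cmod e)\<^sup>2 \<le> (cmod b)\<^sup>2)"
proof -
  define t where "t = 2 powr \<R>"
  have q1: "(1 + \<alpha> * \<gamma> * (cmod a)\<^sup>2) / (1 + \<alpha> * \<gamma> / \<beta> * (cmod c)\<^sup>2) > 0"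
    using assms by (intro divide_pos_pos add_pos_nonneg) auto
  have q2: "(1 + \<gamma> * (cmod b)\<^sup>2) / (1 + \<alpha> * \<gamma> / \<beta> * (cmod e)\<^sup>2) > 0"
    using assms by (intro divide_pos_pos add_pos_nonneg) auto
  have "R3 \<alpha> \<beta> \<gamma> a b c e < \<R> \<longleftrightarrow>
     \<not> (\<R> \<le> log 2 ((1 + \<alpha> * \<gamma> * (cmod a)\<^sup>2) / (1 + \<alpha> * \<gamma> / \<beta> * (cmod c)\<^sup>2)) \<and>
        \<R> \<le> log 2 ((1 + \<gamma> * (cmod b)\<^sup>2) / (1 + \<alpha> * \<gamma> / \<beta> * (cmod e)\<^sup>2)))"
    using assms by (auto simp: R3_def Let_def)
  also have "\<dots> \<longleftrightarrow> \<not> (t \<le> (1 + (\<alpha> * \<gamma>) * (cmod a)\<^sup>2) / (1 + \<alpha> * \<gamma> / \<beta> * (cmod c)\<^sup>2) \<and>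
        t \<le> (1 + \<gamma> * (cmod b)\<^sup>2) / (1 + \<alpha> * \<gamma> / \<beta> * (cmod e)\<^sup>2))"
    using q1 q2 by (simp add: le_log_iff t_def)
  also have "\<dots> \<longleftrightarrow> \<not> ((t - 1) / (\<alpha> * \<gamma>) + (t * (\<alpha> * \<gamma> / \<beta>) / (\<alpha> * \<gamma>)) * (cmod c)\<^sup>2 \<le> (cmod a)\<^sup>2 \<and>
       (t - 1) / \<gamma> + (t * (\<alpha> * \<gamma> / \<beta>) / \<gamma>) * (cmod e)\<^sup>2 \<le> (cmod b)\<^sup>2)"
    using assms ratio_iff[of "\<alpha> * \<gamma>" "\<alpha> * \<gamma> / \<beta>" "(cmod a)\<^sup>2" "(cmod c)\<^sup>2" t]
      ratio_iff[of "\<gamma>" "\<alpha> * \<gamma> / \<beta>" "(cmod b)\<^sup>2" "(cmod e)\<^sup>2" t] by simp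
  also have "(t * (\<alpha> * \<gamma> / \<beta>) / (\<alpha> * \<gamma>)) = t / \<beta>" using assms by simp
  also have "(t * (\<alpha> * \<gamma> / \<beta>) / \<gamma>) = t * \<alpha> / \<beta>" using assms by simp
  finally show ?thesis unfolding t_def .
qed

lemma (in prob_space) indep_single:
  assumes ind: "indep_vars (\<lambda>_. borel) X I" and "i \<in> I" "j \<in> I" "i \<noteq> j"
  shows "indep_var borel (X i) borel (X j)"
proof -
  have "indep_var borel ((\<lambda>x. x i) \<circ> (\<lambda>\<omega>. restrict (\<lambda>k. X k \<omega>) {i}))
                  borel ((\<lambda>x. x j) \<circ> (\<lambda>\<omega>. restrict (\<lambda>k. X k \<omega>) {j}))"
    by (rule indep_var_compose[OF indep_var_restrict[OF ind]]) (use assms in auto)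
  moreover have "((\<lambda>x. x i) \<circ> (\<lambda>\<omega>. restrict (\<lambda>k. X k \<omega>) {i})) = X i"
    "((\<lambda>x. x j) \<circ> (\<lambda>\<omega>. restrict (\<lambda>k. X k \<omega>) {j})) = X j" by (auto simp: fun_eq_iff)
  ultimately show ?thesis by simp
qed

lemma (in prob_space) indep_pairs:
  assumes ind: "indep_vars (\<lambda>_. borel) X I" and "a \<in> I" "b \<in> I" "c \<in> I" "d \<in> I"
    and "{a, b} \<inter> {c, d} = {}"
  shows "indep_var (borel \<Otimes>\<^sub>M borel) (\<lambda>\<omega>. (X a \<omega>, X b \<omega>)) (borel \<Otimes>\<^sub>M borel) (\<lambda>\<omega>. (X c \<omega>, X d \<omega>))"
proof -
  have "indep_var (borel \<Otimes>\<^sub>M borel) ((\<lambda>x. (x a, x b)) \<circ> (\<lambda>\<omega>. restrict (\<lambda>k. X k \<omega>) {a, b}))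
                  (borel \<Otimes>\<^sub>M borel) ((\<lambda>x. (x c, x d)) \<circ> (\<lambda>\<omega>. restrict (\<lambda>k. X k \<omega>) {c, d}))"
    by (rule indep_var_compose[OF indep_var_restrict[OF ind]]) (use assms in auto)
  moreover have "((\<lambda>x. (x a, x b)) \<circ> (\<lambda>\<omega>. restrict (\<lambda>k. X k \<omega>) {a, b})) = (\<lambda>\<omega>. (X a \<omega>, X b \<omega>))"
    "((\<lambda>x. (x c, x d)) \<circ> (\<lambda>\<omega>. restrict (\<lambda>k. X k \<omega>) {c, d})) = (\<lambda>\<omega>. (X c \<omega>, X d \<omega>))"
    by (auto simp: fun_eq_iff)
  ultimately show ?thesis by simp
qed

lemma (in prob_space) event_pair:
  fixes U V :: "'a \<Rightarrow> complex" and c d :: real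
  assumes "CN01 M U" "CN01 M V" "indep_var borel V borel U" "c \<ge> 0" "d \<ge> 0"
  shows "prob ((\<lambda>\<omega>. (V \<omega>, U \<omega>)) -` {(w, z). c + d * (cmod w)\<^sup>2 \<le> (cmod z)\<^sup>2} \<inter> space M) = exp (- c) / (1 + d)"
proof -
  have "(\<lambda>\<omega>. (V \<omega>, U \<omega>)) -` {(w, z). c + d * (cmod w)\<^sup>2 \<le> (cmod z)\<^sup>2} \<inter> space M
      = {\<omega> \<in> space M. c + d * (cmod (V \<omega>))\<^sup>2 \<le> (cmod (U \<omega>))\<^sup>2}" by auto
  moreover have "emeasure M {\<omega> \<in> space M. c + d * (cmod (V \<omega>))\<^sup>2 \<le> (cmod (U \<omega>))\<^sup>2} = ennreal (exp (- c) / (1 + d))"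
    by (rule tail_pair[OF assms])
  ultimately show ?thesis using assms(5) by (simp add: emeasure_eq_measure)
qed

lemma (in prob_space) P3_formula:
  fixes \<R> \<alpha> \<beta> \<gamma> :: real and hSR hRD hSE hRE :: "'a \<Rightarrow> complex"
  assumes "\<R> > 0" and "\<alpha> > 0" and "\<beta> > 0" and "\<gamma> > 0"
    and "CN01 M hSR" and "CN01 M hRD" and "CN01 M hSE" and "CN01 M hRE"
    and ind: "indep_vars (\<lambda>_. borel) (\<lambda>i::nat. [hSR, hRD, hSE, hRE] ! i) {0..<4}"
  shows "P3 M \<R> \<alpha> \<beta> \<gamma> hSR hRD hSE hRE =
    1 - exp (- ((2 powr \<R> - 1) / (\<alpha> * \<gamma>))) / (1 + 2 powr \<R> / \<beta>)
      * (exp (- ((2 powr \<R> - 1) / \<gamma>)) / (1 + 2 powr \<R> * \<alpha> / \<beta>))"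
proof -
  define t where "t = 2 powr \<R>"
  have t: "t > 1" using assms by (simp add: t_def)
  define c1 where "c1 = (t - 1) / (\<alpha> * \<gamma>)"
  define d1 where "d1 = t / \<beta>"
  define c2 where "c2 = (t - 1) / \<gamma>"
  define d2 where "d2 = t * \<alpha> / \<beta>"
  have pos: "c1 \<ge> 0" "d1 \<ge> 0" "c2 \<ge> 0" "d2 \<ge> 0"
    using assms t by (auto simp: c1_def d1_def c2_def d2_def)
  have i1: "indep_var borel hSE borel hSR"
    using indep_single[OF ind, of 2 0] by simp
  have i2: "indep_var borel hRE borel hRD"
    using indep_single[OF ind, of 3 1] by simp
  have iP: "indep_var (borel \<Otimes>\<^sub>M borel) (\<lambda>\<omega>. (hSE \<omega>, hSR \<omega>)) (borel \<Otimes>\<^sub>M borel) (\<lambda>\<omega>. (hRE \<omega>, hRD \<omega>))"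
    using indep_pairs[OF ind, of 2 0 3 1] by simp
  define S1 where "S1 = {(w::complex, z::complex). c1 + d1 * (cmod w)\<^sup>2 \<le> (cmod z)\<^sup>2}"
  define S2 where "S2 = {(w::complex, z::complex). c2 + d2 * (cmod w)\<^sup>2 \<le> (cmod z)\<^sup>2}"
  have S1: "S1 \<in> sets (borel \<Otimes>\<^sub>M borel)"
  proof -
    have "{p \<in> space (borel \<Otimes>\<^sub>M borel). c1 + d1 * (cmod (fst p))\<^sup>2 \<le> (cmod (snd p))\<^sup>2} \<in> sets (borel \<Otimes>\<^sub>M (borel :: complex measure))"
      by measurable
    also have "{p \<in> space (borel \<Otimes>\<^sub>M borel). c1 + d1 * (cmod (fst p))\<^sup>2 \<le> (cmod (snd p))\<^sup>2} = S1"
      by (auto simp: S1_def space_pair_measure)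
    finally show ?thesis .
  qed
  have S2: "S2 \<in> sets (borel \<Otimes>\<^sub>M borel)"
  proof -
    have "{p \<in> space (borel \<Otimes>\<^sub>M borel). c2 + d2 * (cmod (fst p))\<^sup>2 \<le> (cmod (snd p))\<^sup>2} \<in> sets (borel \<Otimes>\<^sub>M (borel :: complex measure))"
      by measurable
    also have "{p \<in> space (borel \<Otimes>\<^sub>M borel). c2 + d2 * (cmod (fst p))\<^sup>2 \<le> (cmod (snd p))\<^sup>2} = S2"
      by (auto simp: S2_def space_pair_measure)
    finally show ?thesis .
  qed
  define A where "A = (\<lambda>x. ((hSE x, hSR x), (hRE x, hRD x))) -` (S1 \<times> S2) \<inter> space M"
  have pA: "prob A = exp (- c1) / (1 + d1) * (exp (- c2) / (1 + d2))"
    unfolding A_def S1_def S2_def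
    using indep_varD[OF iP S1 S2] event_pair[OF assms(5,7) i1 pos(1,2)] event_pair[OF assms(6,8) i2 pos(3,4)]
    by (simp add: S1_def S2_def)
  have Aev: "A \<in> events"
  proof -
    have "(\<lambda>x. ((hSE x, hSR x), (hRE x, hRD x))) \<in> measurable M ((borel \<Otimes>\<^sub>M borel) \<Otimes>\<^sub>M (borel \<Otimes>\<^sub>M borel))"
      using indep_var_rv1[OF iP] indep_var_rv2[OF iP] by (rule measurable_Pair)
    then show ?thesis unfolding A_def using S1 S2 by (auto intro: measurable_sets)
  qed
  have "{\<omega> \<in> space M. R3 \<alpha> \<beta> \<gamma> (hSR \<omega>) (hRD \<omega>) (hSE \<omega>) (hRE \<omega>) < \<R>} = space M - A"
    using assms(1-4) by (auto simp: A_def S1_def S2_def R3_iff c1_def d1_def c2_def d2_def t_def)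
  then have "P3 M \<R> \<alpha> \<beta> \<gamma> hSR hRD hSE hRE = 1 - prob A"
    using Aev by (simp add: P3_def prob_compl)
  then show ?thesis using pA by (simp add: c1_def d1_def c2_def d2_def t_def)
qed

theorem theorem9:
  fixes M :: "'a measure" and \<R> \<alpha> \<beta> :: real
    and hSR hRD hSE hRE :: "'a \<Rightarrow> complex"
  assumes "prob_space M"
    and "\<R> > 0" and "\<alpha> > 0" and "\<beta> > 0"
    and "CN01 M hSR" and "CN01 M hRD" and "CN01 M hSE" and "CN01 M hRE"
    and "prob_space.indep_vars M (\<lambda>_. borel)
           (\<lambda>i::nat. [hSR, hRD, hSE, hRE] ! i) {0..<4}"
  shows "((\<lambda>\<gamma>D. P3 M \<R> \<alpha> \<beta> \<gamma>D hSR hRD hSE hRE)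
            \<longlongrightarrow> 1 - (\<beta> / (\<beta> + \<alpha> * 2 powr \<R>)) * (\<beta> / (\<beta> + 2 powr \<R>))) at_top
     \<and> ((\<lambda>\<gamma>D. \<gamma>D * (P3 M \<R> \<alpha> \<beta> \<gamma>D hSR hRD hSE hRE
              - (1 - (\<beta> / (\<beta> + \<alpha> * 2 powr \<R>)) * (\<beta> / (\<beta> + 2 powr \<R>)))))
            \<longlongrightarrow> (2 powr \<R> - 1) * (1 + 1 / \<alpha>)
                 / ((1 + \<alpha> / \<beta> * 2 powr \<R>) * (1 + 1 / \<beta> * 2 powr \<R>))) at_top"
proof -
  interpret prob_space M by fact
  define t where "t = 2 powr \<R>"
  have t: "t > 1" using assms by (simp add: t_def)
  define K where "K = 1 / ((1 + t / \<beta>) * (1 + t * \<alpha> / \<beta>))"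
  define m where "m = (t - 1) * (1 + 1 / \<alpha>)"
  have m: "m > 0" using t assms by (simp add: m_def add_pos_pos)
  have K1: "1 - (\<beta> / (\<beta> + \<alpha> * 2 powr \<R>)) * (\<beta> / (\<beta> + 2 powr \<R>)) = 1 - K"
    using assms t unfolding K_def t_def[symmetric] by (simp add: field_simps)
  have K2: "(2 powr \<R> - 1) * (1 + 1 / \<alpha>) / ((1 + \<alpha> / \<beta> * 2 powr \<R>) * (1 + 1 / \<beta> * 2 powr \<R>)) = K * m"
    using assms t unfolding K_def m_def t_def[symmetric] by (simp add: field_simps)
  have ev: "eventually (\<lambda>\<gamma>. P3 M \<R> \<alpha> \<beta> \<gamma> hSR hRD hSE hRE = 1 - K * exp (- m / \<gamma>)) at_top"
    using eventually_gt_at_top[of 0]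
  proof eventually_elim
    case (elim \<gamma>)
    have "P3 M \<R> \<alpha> \<beta> \<gamma> hSR hRD hSE hRE =
      1 - exp (- ((t - 1) / (\<alpha> * \<gamma>))) / (1 + t / \<beta>) * (exp (- ((t - 1) / \<gamma>)) / (1 + t * \<alpha> / \<beta>))"
      using P3_formula[OF assms(2-4) elim assms(5-)] by (simp add: t_def)
    also have "exp (- ((t - 1) / (\<alpha> * \<gamma>))) / (1 + t / \<beta>) * (exp (- ((t - 1) / \<gamma>)) / (1 + t * \<alpha> / \<beta>))
       = K * (exp (- ((t - 1) / (\<alpha> * \<gamma>))) * exp (- ((t - 1) / \<gamma>)))"
      by (simp add: K_def)
    also have "exp (- ((t - 1) / (\<alpha> * \<gamma>))) * exp (- ((t - 1) / \<gamma>)) = exp (- m / \<gamma>)"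
      unfolding exp_add[symmetric] using assms elim by (simp add: m_def field_simps)
    finally show ?case .
  qed
  have L1: "((\<lambda>\<gamma>. 1 - K * exp (- m / \<gamma>)) \<longlongrightarrow> 1 - K) at_top"
  proof -
    have "((\<lambda>x. exp (- m / x)) \<longlongrightarrow> 1) at_top" by real_asymp
    from tendsto_diff[OF tendsto_const tendsto_mult_left[OF this, of K], of 1] show ?thesis by simp
  qed
  have L2: "((\<lambda>\<gamma>. \<gamma> * ((1 - K * exp (- m / \<gamma>)) - (1 - K))) \<longlongrightarrow> K * m) at_top"
  proof -
    have "((\<lambda>x. x * (1 - exp (- m / x))) \<longlongrightarrow> m) at_top" using m by real_asymp
    then have "((\<lambda>x. K * (x * (1 - exp (- m / x)))) \<longlongrightarrow> K * m) at_top" by (rule tendsto_mult_left)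
    moreover have "(\<lambda>x. K * (x * (1 - exp (- m / x)))) = (\<lambda>\<gamma>. \<gamma> * ((1 - K * exp (- m / \<gamma>)) - (1 - K)))"
      by (auto simp: fun_eq_iff algebra_simps)
    ultimately show ?thesis by simp
  qed
  have ev2: "eventually (\<lambda>\<gamma>. \<gamma> * ((1 - K * exp (- m / \<gamma>)) - (1 - K)) =
      \<gamma> * (P3 M \<R> \<alpha> \<beta> \<gamma> hSR hRD hSE hRE - (1 - K))) at_top"
    using ev by eventually_elim simp
  show ?thesis unfolding K1 K2
    using tendsto_cong[OF ev, THEN iffD2, OF L1] tendsto_cong[OF ev2, THEN iffD1, OF L2] by simp
qed

end
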